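(* For a flat layout $L$, the following are equivalent: (1) $L$ is compact; (2) $\mathrm{coal}^\flat(L)$ is compact; (3) $\mathrm{squeeze}(L)$ is compact; (4) $\mathrm{sort}(L)$ is compact.
   Context: A flat layout $L=(s_1,\dots,s_m):(d_1,\dots,d_m)$ has positive integer shape entries and nonnegative integer stride entries, with modes $s_i:d_i$; $\mathrm{size}(L)=\prod s_i$, $\mathrm{cosize}(L)=1+\sum(s_i-1)d_i$. Layout function: $\Phi_L(x)=\sum x_id_i$ with $x_i=\lfloor x/(s_1\cdots s_{i-1})\rfloor\bmod s_i$ on $[0,\mathrm{size}(L))$. $L$ is compact if $\Phi_L:[0,\mathrm{size}(L))\to[0,\mathrm{cosize}(L))$ is a bijection. $\mathrm{squeeze}(L)$ removes modes with $s_i=1$. $\mathrm{coal}^\flat(L)$ is obtained from $\mathrm{squeeze}(L)$ by repeatedly replacing adjacent modes $s_i,s_{i+1}:d_i,d_{i+1}$ with $d_{i+1}=s_id_i$ by $s_is_{i+1}:d_i$. Order pairs by $s:d\preceq s':d'$ iff $d<d'$ or ($d=d'$ and $s\le s'$); $\mathrm{sort}(L)$ reorders the modes (stably) into $\preceq$-nondecreasing order. *)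

theory Defs
  imports Main "HOL-Library.Product_Lexorder"
begin

text \<open>A flat layout is a list of modes (s_i, d_i): shape s_i, stride d_i.
  Shapes are required to be positive (predicate flat_layout).\<close>

type_synonym layout = "(nat \<times> nat) list"

definition flat_layout :: "layout \<Rightarrow> bool" where
  "flat_layout L \<longleftrightarrow> (\<forall>m \<in> set L. fst m > 0)"

definition lsize :: "layout \<Rightarrow> nat" where
  "lsize L = (\<Prod>i<length L. fst (L ! i))"

definition lcosize :: "layout \<Rightarrow> nat" where
  "lcosize L = 1 + (\<Sum>i<length L. (fst (L ! i) - 1) * snd (L ! i))"

definition coord :: "layout \<Rightarrow> nat \<Rightarrow> nat \<Rightarrow> nat" where
  "coord L x i = (x div (\<Prod>j<i. fst (L ! j))) mod fst (L ! i)"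

definition layout_fun :: "layout \<Rightarrow> nat \<Rightarrow> nat" where
  "layout_fun L x = (\<Sum>i<length L. coord L x i * snd (L ! i))"

definition compact :: "layout \<Rightarrow> bool" where
  "compact L \<longleftrightarrow> bij_betw (layout_fun L) {0..<lsize L} {0..<lcosize L}"

definition squeeze :: "layout \<Rightarrow> layout" where
  "squeeze L = filter (\<lambda>m. fst m \<noteq> 1) L"

text \<open>Exhaustive merging of adjacent modes s_i, s_(i+1) : d_i, d_(i+1) with
  d_(i+1) = s_i * d_i into s_i * s_(i+1) : d_i.\<close>
fun coal_aux :: "layout \<Rightarrow> layout" where
  "coal_aux [] = []"
| "coal_aux ((s, d) # L) =
     (case coal_aux L of
        [] \<Rightarrow> [(s, d)]
      | (s', d') # R \<Rightarrow>
          (if d' = s * d then (s * s', d) # R else (s, d) # (s', d') # R))"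

definition coal_flat :: "layout \<Rightarrow> layout" where
  "coal_flat L = coal_aux (squeeze L)"

text \<open>Stable sort w.r.t. s:d \<preceq> s':d' iff d < d' or (d = d' and s \<le> s'),
  i.e. lexicographic order on the key (d, s); sort_key is stable.\<close>
definition lsort :: "layout \<Rightarrow> layout" where
  "lsort L = sort_key (\<lambda>(s, d). (d, s)) L"

end

theory Submission
  imports Defs "HOL-Library.Multiset"
begin

lemma lsize_Nil: "lsize [] = 1" by (simp add: lsize_def)
lemma lsize_Cons: "lsize (m # L) = fst m * lsize L"
  unfolding lsize_def length_Cons prod.lessThan_Suc_shift by simp
lemma lcosize_Nil: "lcosize [] = 1" by (simp add: lcosize_def)
lemma lcosize_Cons: "lcosize (m # L) = (fst m - 1) * snd m + lcosize L"
  unfolding lcosize_def length_Cons sum.lessThan_Suc_shift by simp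

lemma coord_Cons_0: "coord (m # L) x 0 = x mod fst m"
  by (simp add: coord_def)
lemma coord_Cons_Suc: "coord (m # L) x (Suc i) = coord L (x div fst m) i"
  unfolding coord_def prod.lessThan_Suc_shift by (simp add: div_mult2_eq)

lemma lf_Nil: "layout_fun [] x = 0" by (simp add: layout_fun_def)
lemma lf_Cons: "layout_fun (m # L) x = (x mod fst m) * snd m + layout_fun L (x div fst m)"
  unfolding layout_fun_def length_Cons sum.lessThan_Suc_shift by (simp add: coord_Cons_0 coord_Cons_Suc)

lemma lsize_prod: "lsize L = prod_list (map fst L)"
  by (induction L) (simp_all add: lsize_Nil lsize_Cons)
lemma lcosize_sum: "lcosize L = 1 + sum_list (map (\<lambda>m. (fst m - 1) * snd m) L)"
  by (induction L) (simp_all add: lcosize_Nil lcosize_Cons)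

lemma squeeze_props:
  "layout_fun (squeeze L) = layout_fun L \<and> lsize (squeeze L) = lsize L
   \<and> lcosize (squeeze L) = lcosize L"
  by (induction L) (auto simp: squeeze_def lf_Cons lsize_Cons lcosize_Cons)

lemma compact_cong:
  "layout_fun A = layout_fun B \<Longrightarrow> lsize A = lsize B \<Longrightarrow> lcosize A = lcosize B
   \<Longrightarrow> compact A = compact B"
  by (simp add: compact_def)

lemma coal_props:
  "\<forall>m\<in>set L. fst m > 0 \<Longrightarrow>
   layout_fun (coal_aux L) = layout_fun L \<and> lsize (coal_aux L) = lsize L
   \<and> lcosize (coal_aux L) = lcosize L \<and> (\<forall>m\<in>set (coal_aux L). fst m > 0)"
proof (induction L rule: coal_aux.induct)
  case 1
  then show ?case by simp
next
  case (2 s d L)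
  then have IH: "layout_fun (coal_aux L) = layout_fun L" "lsize (coal_aux L) = lsize L"
    "lcosize (coal_aux L) = lcosize L" "\<forall>m\<in>set (coal_aux L). fst m > 0" and sp: "s > 0"
    by auto
  show ?case
  proof (cases "coal_aux L")
    case Nil
    then show ?thesis using IH sp
      by (simp add: fun_eq_iff lf_Cons lsize_Cons lcosize_Cons)
  next
    case (Cons m R)
    obtain s' d' where m: "m = (s', d')" by fastforce
    have s'p: "s' > 0" using IH(4) Cons m by auto
    show ?thesis
    proof (cases "d' = s * d")
      case True
      have lfe: "layout_fun ((s * s', d) # R) x = layout_fun ((s, d) # (s', d') # R) x" for x
        using True by (simp only: lf_Cons fst_conv snd_conv mod_mult2_eq div_mult2_eq)
          (simp add: algebra_simps)
      have "layout_fun ((s, d) # coal_aux L) = layout_fun ((s, d) # L)"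
        using IH(1) by (simp add: fun_eq_iff lf_Cons)
      moreover have "lsize ((s, d) # coal_aux L) = lsize ((s, d) # L)"
        using IH(2) by (simp add: lsize_Cons)
      moreover have "lcosize ((s, d) # coal_aux L) = lcosize ((s, d) # L)"
        using IH(3) by (simp add: lcosize_Cons)
      moreover have "lcosize ((s * s', d) # R) = lcosize ((s, d) # (s', d') # R)"
      proof -
        have "(s * s' - 1) * d = (s - 1) * d + (s' - 1) * (s * d)"
          using sp s'p by (cases s; cases s'; simp add: algebra_simps)
        then show ?thesis using True by (simp add: lcosize_Cons)
      qed
      ultimately show ?thesis using Cons m True lfe IH(4) sp s'p
        by (auto simp: fun_eq_iff lsize_Cons)
    next
      case False
      then show ?thesis using Cons m IH sp
        by (auto simp: fun_eq_iff lf_Cons lsize_Cons lcosize_Cons)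
    qed
  qed
qed

definition stp :: "nat \<times> nat \<Rightarrow> nat set \<Rightarrow> nat set" where
  "stp m A = {z. \<exists>a<fst m. \<exists>y\<in>A. z = a * snd m + y}"

definition SS :: "layout \<Rightarrow> nat set" where
  "SS L = foldr stp L {0}"

lemma image_SS: "layout_fun L ` {0..<lsize L} = SS L"
proof (induction L)
  case Nil
  then show ?case by (simp add: SS_def lsize_Nil lf_Nil)
next
  case (Cons m L)
  obtain s d where m: "m = (s, d)" by fastforce
  show ?case
  proof
    show "layout_fun (m # L) ` {0..<lsize (m # L)} \<subseteq> SS (m # L)"
    proof
      fix z assume "z \<in> layout_fun (m # L) ` {0..<lsize (m # L)}"
      then obtain x where x: "x < s * lsize L" "z = (x mod s) * d + layout_fun L (x div s)"
        by (auto simp: m lsize_Cons lf_Cons)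
      have sp: "s > 0" using x by (cases s) auto
      have "x div s < lsize L" using x sp by (simp add: div_less_iff_less_mult mult.commute)
      then have "layout_fun L (x div s) \<in> SS L" using Cons.IH by auto
      then show "z \<in> SS (m # L)" using x sp
        unfolding SS_def stp_def m by (auto intro!: exI[of _ "x mod s"])
    qed
  next
    show "SS (m # L) \<subseteq> layout_fun (m # L) ` {0..<lsize (m # L)}"
    proof
      fix z assume "z \<in> SS (m # L)"
      then obtain a y where ay: "a < s" "y \<in> SS L" "z = a * d + y"
        by (auto simp: SS_def stp_def m)
      from ay(2) have "y \<in> layout_fun L ` {0..<lsize L}" using Cons.IH by simp
      then obtain w where w: "w < lsize L" "y = layout_fun L w" by auto
      define x where "x = a + s * w"
      have "x mod s = a" "x div s = w" using ay(1) by (simp_all add: x_def)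
      moreover have "x < s * lsize L"
      proof -
        have "x < s + s * w" using ay(1) by (simp add: x_def)
        also have "\<dots> = s * (Suc w)" by simp
        also have "\<dots> \<le> s * lsize L" using w(1) by (intro mult_le_mono2) simp
        finally show ?thesis .
      qed
      ultimately show "z \<in> layout_fun (m # L) ` {0..<lsize (m # L)}"
        using ay w by (auto simp: m lsize_Cons lf_Cons intro!: image_eqI[of _ _ x])
    qed
  qed
qed

lemma stp_comm: "stp m1 \<circ> stp m2 = stp m2 \<circ> stp m1"
proof -
  have sub: "stp m1 (stp m2 A) \<subseteq> stp m2 (stp m1 A)" for m1 m2 A
  proof
    fix z assume "z \<in> stp m1 (stp m2 A)"
    then obtain a b y where "a < fst m1" "b < fst m2" "y \<in> A"
      "z = a * snd m1 + (b * snd m2 + y)" by (auto simp: stp_def)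
    then have "a * snd m1 + y \<in> stp m1 A" "z = b * snd m2 + (a * snd m1 + y)"
      by (auto simp: stp_def)
    then show "z \<in> stp m2 (stp m1 A)" using \<open>b < fst m2\<close>
      unfolding stp_def by blast
  qed
  show ?thesis by (rule ext) (simp add: sub subset_antisym)
qed

lemma SS_mset: "mset L = mset L' \<Longrightarrow> SS L = SS L'"
  unfolding SS_def foldr_conv_fold
  by (rule fun_cong[OF fold_multiset_equiv]) (auto simp: stp_comm)

lemma compact_char:
  "compact L \<longleftrightarrow> lsize L = lcosize L \<and> SS L = {0..<lcosize L}"
proof -
  have "compact L \<longleftrightarrow> layout_fun L ` {0..<lsize L} = {0..<lcosize L} \<and> lsize L = lcosize L"
    unfolding compact_def
  proof
    assume b: "bij_betw (layout_fun L) {0..<lsize L} {0..<lcosize L}"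
    then have "card {0..<lsize L} = card {0..<lcosize L}" by (rule bij_betw_same_card)
    then show "layout_fun L ` {0..<lsize L} = {0..<lcosize L} \<and> lsize L = lcosize L"
      using b by (simp add: bij_betw_def)
  next
    assume h: "layout_fun L ` {0..<lsize L} = {0..<lcosize L} \<and> lsize L = lcosize L"
    then have e1: "layout_fun L ` {0..<lsize L} = {0..<lcosize L}" and e2: "lsize L = lcosize L"
      by auto
    have "card (layout_fun L ` {0..<lsize L}) = card {0..<lsize L}"
      unfolding e1 by (simp add: e2)
    then have "inj_on (layout_fun L) {0..<lsize L}"
      by (intro eq_card_imp_inj_on) simp_all
    then show "bij_betw (layout_fun L) {0..<lsize L} {0..<lcosize L}"
      using e1 unfolding bij_betw_def by blast
  qed
  then show ?thesis using image_SS by auto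
qed

lemma compact_mset: "mset L = mset L' \<Longrightarrow> compact L = compact L'"
proof -
  assume h: "mset L = mset L'"
  have "lsize L = lsize L'" unfolding lsize_prod
    by (simp only: prod_mset_prod_list[symmetric] mset_map h)
  moreover have "lcosize L = lcosize L'" unfolding lcosize_sum
    by (simp only: sum_mset_sum_list[symmetric] mset_map h)
  ultimately show ?thesis using SS_mset[OF h] by (simp add: compact_char)
qed

theorem mainTheorem12:
  assumes "flat_layout L"
  shows "(compact L \<longleftrightarrow> compact (coal_flat L))
       \<and> (compact L \<longleftrightarrow> compact (squeeze L))
       \<and> (compact L \<longleftrightarrow> compact (lsort L))"
proof -
  have sq: "compact L \<longleftrightarrow> compact (squeeze L)"
    using squeeze_props[of L] compact_cong by metis
  have pos: "\<forall>m\<in>set (squeeze L). fst m > 0"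
    using assms by (auto simp: flat_layout_def squeeze_def)
  have co: "compact (squeeze L) \<longleftrightarrow> compact (coal_flat L)"
    unfolding coal_flat_def using coal_props[OF pos] compact_cong by metis
  have so: "compact L \<longleftrightarrow> compact (lsort L)"
    by (rule compact_mset) (simp add: lsort_def)
  show ?thesis using sq co so by simp
qed

end
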